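(* Let $k\ge 2$ be a fixed integer and let $c_2,\dots,c_k$ be constants with $0<c_i<\frac{1}{16k^2}\binom{k-1}{i-1}10^{-3\frac{k-i}{k-1}}$. There exist $T_0(k)$ and $N_0(k,T)$ such that for all $T\ge T_0(k)$, $N\ge N_0(k,T)$, and $s=0.001\ln T$, the following holds. Let $\mathcal H=(V,\mathcal E_2\cup\dots\cup\mathcal E_k)$ be a hypergraph on $N$ vertices with average degrees $t_i^{i-1}:=i|\mathcal E_i|/N$ satisfying $t_i^{i-1}\le c_iT^{i-1}(\ln T)^{\frac{k-i}{k-1}}$ for $i=2,\dots,k$. Then there is a set $V^*\subseteq V$ with $|V^*|=n$ such that the induced subhypergraph $\mathcal H^*=\mathcal H[V^*]$ satisfies (a) $\frac34\frac{N}{e^s}\le n\le\frac{N}{e^s}$, and (b) for every $v\in V^*$ and every $i=2,\dots,k$, the number $d_i^*(v)$ of $i$-element edges of $\mathcal H^*$ containing $v$ satisfies $$d_i^*(v)\le\binom{k-1}{i-1}s^{\frac{k-i}{k-1}}\Big(\frac{T}{e^s}\Big)^{i-1}.$$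
   Context: $\mathcal E_i$ denotes the set of edges of size $i$ of a hypergraph; $\mathcal H[V^*]$ is the subhypergraph induced on $V^*$ (all edges contained in $V^*$). *)

theory Defs
  imports Complex_Main
begin

definition hypergraph_2k :: "nat \<Rightarrow> 'a set \<Rightarrow> 'a set set \<Rightarrow> bool" where
  "hypergraph_2k k V E \<longleftrightarrow> finite V \<and> (\<forall>e\<in>E. e \<subseteq> V \<and> 2 \<le> card e \<and> card e \<le> k)"

definition edges_of_size :: "'a set set \<Rightarrow> nat \<Rightarrow> 'a set set" where
  "edges_of_size E i = {e \<in> E. card e = i}"

definition induced_edges :: "'a set set \<Rightarrow> 'a set \<Rightarrow> 'a set set" where
  "induced_edges E W = {e \<in> E. e \<subseteq> W}"

definition degree_i :: "'a set set \<Rightarrow> nat \<Rightarrow> 'a \<Rightarrow> nat" where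
  "degree_i E i v = card {e \<in> edges_of_size E i. v \<in> e}"

end

theory Submission imports Defs begin

lemma bern_aux:
  fixes w :: real and j :: nat
  assumes "w \<ge> 2" "real j \<le> w"
  shows "(w - real j) * w ^ j \<le> w * (w - 1) ^ j"
proof -
  have "1 + real j * (-1/w) \<le> (1 + (-1/w)) ^ j"
    by (rule Bernoulli_inequality) (use assms in \<open>simp add: field_simps\<close>)
  hence "(1 - real j / w) * w ^ j \<le> ((w - 1)/w) ^ j * w ^ j"
    using assms by (intro mult_right_mono) (auto simp: field_simps)
  also have "\<dots> = (w-1)^j" using assms by (simp add: power_divide)
  finally have "(1 - real j / w) * w ^ j \<le> (w-1)^j" .
  hence "w * ((1 - real j / w) * w ^ j) \<le> w * (w-1)^j"
    using assms by (intro mult_left_mono) auto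
  moreover have "w * ((1 - real j / w) * w ^ j) = (w - real j) * w ^ j"
    using assms by (simp add: field_simps)
  ultimately show ?thesis by simp
qed

definition pot :: "(nat \<Rightarrow> real) \<Rightarrow> 'a set set \<Rightarrow> 'a set \<Rightarrow> real" where
  "pot \<phi> E W = (\<Sum>e\<in>{e\<in>E. e \<subseteq> W}. \<phi> (card e) / real (card W) ^ card e)"

lemma pot_step:
  assumes W: "finite W" "card W \<ge> 2" and E: "finite E" "\<forall>e\<in>E. finite e \<and> card e \<ge> 1"
    and phi: "\<forall>j. \<phi> j \<ge> 0"
  shows "\<exists>x\<in>W. pot \<phi> E (W-{x}) \<le> pot \<phi> E W"
proof (rule ccontr)
  assume "\<not> ?thesis"
  hence lt: "\<forall>x\<in>W. pot \<phi> E W < pot \<phi> E (W-{x})" by auto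
  define w where "w = card W"
  define F where "F = {e\<in>E. e \<subseteq> W}"
  have fF: "finite F" using E unfolding F_def by auto
  have Wne: "W \<noteq> {}" using W by auto
  have "(\<Sum>x\<in>W. pot \<phi> E W) < (\<Sum>x\<in>W. pot \<phi> E (W-{x}))"
    using lt W Wne by (intro sum_strict_mono) auto
  also have "(\<Sum>x\<in>W. pot \<phi> E (W-{x})) = (\<Sum>x\<in>W. \<Sum>e\<in>F. if x \<notin> e then \<phi> (card e) / real (w-1) ^ card e else 0)"
  proof (rule sum.cong[OF refl])
    fix x assume x: "x \<in> W"
    have cw: "card (W - {x}) = w - 1" using x W unfolding w_def by simp
    have "{e\<in>E. e \<subseteq> W - {x}} = {e\<in>F. x \<notin> e}" unfolding F_def by auto
    thus "pot \<phi> E (W-{x}) = (\<Sum>e\<in>F. if x \<notin> e then \<phi> (card e) / real (w-1) ^ card e else 0)"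
      unfolding pot_def cw by (simp only: sum.inter_filter[OF fF])
  qed
  also have "\<dots> = (\<Sum>e\<in>F. \<Sum>x\<in>W. if x \<notin> e then \<phi> (card e) / real (w-1) ^ card e else 0)"
    by (rule sum.swap)
  also have "\<dots> = (\<Sum>e\<in>F. real (w - card e) * (\<phi> (card e) / real (w-1) ^ card e))"
  proof (rule sum.cong[OF refl])
    fix e assume e: "e \<in> F"
    have "e \<subseteq> W" "finite e" using e E unfolding F_def by auto
    hence "card (W - e) = w - card e" unfolding w_def using W by (simp add: card_Diff_subset)
    moreover have "(\<Sum>x\<in>W. if x \<notin> e then \<phi> (card e) / real (w-1) ^ card e else 0)
       = (\<Sum>x\<in>W - e. \<phi> (card e) / real (w-1) ^ card e)"
      using sum.inter_filter[OF W(1), of "\<lambda>x. \<phi> (card e) / real (w-1) ^ card e" "\<lambda>x. x \<notin> e"]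
      by (simp add: set_diff_eq)
    ultimately show "(\<Sum>x\<in>W. if x \<notin> e then \<phi> (card e) / real (w-1) ^ card e else 0) = real (w - card e) * (\<phi> (card e) / real (w-1) ^ card e)"
      by simp
  qed
  also have "\<dots> \<le> (\<Sum>e\<in>F. real w * (\<phi> (card e) / real w ^ card e))"
  proof (rule sum_mono)
    fix e assume e: "e \<in> F"
    have sub: "e \<subseteq> W" "finite e" "card e \<ge> 1" using e E unfolding F_def by auto
    hence le: "card e \<le> w" unfolding w_def using W card_mono by blast
    have w2: "real w \<ge> 2" using W unfolding w_def by simp
    have b: "(real w - real (card e)) * real w ^ card e \<le> real w * (real w - 1) ^ card e"
      using bern_aux[OF w2, of "card e"] le by simp
    have p1: "(real w - 1) ^ card e > 0" "real w ^ card e > 0" using w2 by auto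
    have "real (w - card e) / real (w-1) ^ card e \<le> real w / real w ^ card e"
      using b p1 le w2 by (simp add: divide_simps of_nat_diff)
    thus "real (w - card e) * (\<phi> (card e) / real (w-1) ^ card e) \<le> real w * (\<phi> (card e) / real w ^ card e)"
      using phi mult_right_mono[of "real (w - card e) / real (w-1) ^ card e" "real w / real w ^ card e" "\<phi> (card e)"]
      by (simp add: field_simps)
  qed
  also have "\<dots> = (\<Sum>x\<in>W. pot \<phi> E W)"
    unfolding pot_def F_def[symmetric] w_def by (simp add: sum_distrib_left)
  finally show False by simp
qed


lemma pot_iter:
  assumes "finite W" "1 \<le> m" "m \<le> card W" and E: "finite E" "\<forall>e\<in>E. finite e \<and> card e \<ge> 1"
    and phi: "\<forall>j. \<phi> j \<ge> 0"
  shows "\<exists>W'\<subseteq>W. card W' = m \<and> pot \<phi> E W' \<le> pot \<phi> E W"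
  using assms(1,3)
proof (induction "card W - m" arbitrary: W)
  case 0
  hence "card W = m" by simp
  thus ?case by blast
next
  case (Suc d)
  hence c2: "card W \<ge> 2" using assms(2) by simp
  obtain x where x: "x \<in> W" "pot \<phi> E (W-{x}) \<le> pot \<phi> E W"
    using pot_step[OF Suc.prems(1) c2 E phi] by blast
  have "d = card (W - {x}) - m" "finite (W-{x})" "m \<le> card (W-{x})"
    using Suc x by auto
  from Suc.hyps(1)[OF this] obtain W' where "W' \<subseteq> W - {x}" "card W' = m" "pot \<phi> E W' \<le> pot \<phi> E (W-{x})"
    by blast
  thus ?case using x by (intro exI[of _ W']) auto
qed

theorem mainTheorem3:
  fixes k :: nat and c :: "nat \<Rightarrow> real"
  assumes "k \<ge> 2"
    and "\<forall>i\<in>{2..k}. 0 < c i \<and>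
           c i < 1 / (16 * real k ^ 2) * real ((k - 1) choose (i - 1))
                 * 10 powr (- 3 * (real (k - i) / real (k - 1)))"
  shows "\<exists>T0 :: real. \<exists>N0 :: real \<Rightarrow> nat.
    \<forall>T :: real. \<forall>N :: nat. \<forall>s :: real. \<forall>V :: nat set. \<forall>E :: nat set set.
      T \<ge> T0 \<longrightarrow> N \<ge> N0 T \<longrightarrow> s = 0.001 * ln T \<longrightarrow>
      hypergraph_2k k V E \<longrightarrow> card V = N \<longrightarrow>
      (\<forall>i\<in>{2..k}. real i * real (card (edges_of_size E i)) / real N
          \<le> c i * T ^ (i - 1) * (ln T) powr (real (k - i) / real (k - 1))) \<longrightarrow>
      (\<exists>Vs \<subseteq> V.
         3 / 4 * (real N / exp s) \<le> real (card Vs) \<and> real (card Vs) \<le> real N / exp s \<and>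
         (\<forall>v\<in>Vs. \<forall>i\<in>{2..k}.
            real (degree_i (induced_edges E Vs) i v)
              \<le> real ((k - 1) choose (i - 1)) * s powr (real (k - i) / real (k - 1))
                 * (T / exp s) ^ (i - 1)))"
proof (rule exI[of _ 2], rule exI[of _ "\<lambda>T. nat \<lceil>5 * exp (0.001 * ln T)\<rceil>"], intro allI impI)
  fix T :: real and N :: nat and s :: real and V :: "nat set" and E :: "nat set set"
  assume T: "T \<ge> 2" and N: "N \<ge> nat \<lceil>5 * exp (0.001 * ln T)\<rceil>" and s: "s = 0.001 * ln T"
    and H: "hypergraph_2k k V E" and cV: "card V = N"
    and avg: "\<forall>i\<in>{2..k}. real i * real (card (edges_of_size E i)) / real N
          \<le> c i * T ^ (i - 1) * (ln T) powr (real (k - i) / real (k - 1))"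
  define L where "L = ln T"
  have L: "L > 0" unfolding L_def using T by simp
  have sL: "s = 1/1000 * L" unfolding s L_def by simp
  have spos: "s > 0" using sL L by simp
  define P where "P = real N / exp s"
  have N5: "real N \<ge> 5 * exp s"
  proof -
    have "nat \<lceil>5 * exp s\<rceil> \<le> N" using N by (simp only: s)
    hence "\<lceil>5 * exp s\<rceil> \<le> int N" by (simp add: nat_le_iff)
    hence "of_int \<lceil>5 * exp s\<rceil> \<le> real N" by linarith
    thus ?thesis using le_of_int_ceiling[of "5 * exp s"] by linarith
  qed
  have P5: "P \<ge> 5" unfolding P_def using N5 by (simp add: field_simps)
  have Npos: "real N > 0" using N5 by (smt (verit) exp_gt_zero)
  define m where "m = nat \<lfloor>P\<rfloor>"
  have m1: "real m \<le> P" "real m > P - 1" unfolding m_def using P5 by linarith+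
  have mge1: "m \<ge> 1" using m1 P5 by linarith
  have PN: "P \<le> real N"
  proof -
    have e1: "1 \<le> exp s" using spos by simp
    have "real N * 1 \<le> real N * exp s" using e1 by (intro mult_left_mono) auto
    thus ?thesis unfolding P_def by (simp add: field_simps)
  qed
  have mN: "m \<le> N" using m1 PN by linarith
  have finV: "finite V" and Esub: "\<forall>e\<in>E. e \<subseteq> V \<and> 2 \<le> card e \<and> card e \<le> k"
    using H unfolding hypergraph_2k_def by auto
  have finE: "finite E" using finV Esub by (meson Pow_iff finite_Pow_iff finite_subset subsetI)
  have Efe: "\<forall>e\<in>E. finite e \<and> card e \<ge> 1"
    using Esub finV finite_subset by fastforce
  define a where "a = (\<lambda>i::nat. real (k - i) / real (k - 1))"
  define B where "B = (\<lambda>i::nat. real ((k - 1) choose (i - 1)) * s powr a i * (T / exp s) ^ (i - 1))"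
  have Bnn: "B i \<ge> 0" for i unfolding B_def using T by auto
  have Bpos: "B i > 0" if "i \<in> {2..k}" for i
    unfolding B_def using T spos that by auto
  define \<phi> where "\<phi> = (\<lambda>j. real j * real m ^ j / B j)"
  have phi: "\<forall>j. \<phi> j \<ge> 0" unfolding \<phi>_def using Bnn by auto
  obtain W where W: "W \<subseteq> V" "card W = m" "pot \<phi> E W \<le> pot \<phi> E V"
    using pot_iter[OF finV mge1 _ finE Efe phi] mN cV by auto
  have finW: "finite W" using W finV finite_subset by auto
  have termb: "real i * real (card (edges_of_size E i)) * (real m / real N) ^ i / B i
      \<le> P / (16 * real k ^ 2)" if i: "i \<in> {2..k}" for i
  proof -
    define X where "X = real i * real (card (edges_of_size E i)) / real N"
    define C where "C = real ((k - 1) choose (i - 1))"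
    define p where "p = 1 / exp s"
    have Cpos: "C > 0" unfolding C_def using i by auto
    have ppos: "p > 0" unfolding p_def by simp
    have X: "X \<le> c i * T ^ (i - 1) * L powr a i" using avg i unfolding X_def L_def a_def by auto
    have ci: "c i < 1 / (16 * real k ^ 2) * C * 10 powr (- 3 * a i)" "c i > 0"
      using assms(2) i unfolding C_def a_def by auto
    have "(10::real) powr (- 3 * a i) = (10 powr (-3)) powr a i" by (simp add: powr_powr)
    also have "(10::real) powr (-3) = 1/1000" by (simp add: powr_minus powr_numeral)
    finally have t1: "(10::real) powr (- 3 * a i) = (1/1000) powr a i" .
    have t2: "s powr a i = (1/1000) powr a i * L powr a i" unfolding sL using L by (intro powr_mult; simp)
    have cL: "c i * L powr a i \<le> C * s powr a i / (16 * real k ^ 2)"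
    proof -
      have "c i * L powr a i \<le> (1 / (16 * real k ^ 2) * C * 10 powr (- 3 * a i)) * L powr a i"
        using ci by (intro mult_right_mono) auto
      thus ?thesis unfolding t1 t2 by (simp add: field_simps)
    qed
    have q: "real m / real N \<le> p" unfolding p_def using m1 Npos unfolding P_def by (simp add: field_simps)
    have q0: "real m / real N \<ge> 0" by simp
    have i1: "i = Suc (i - 1)" using i by auto
    have "X * (real m / real N) ^ i \<le> (c i * T ^ (i - 1) * L powr a i) * p ^ i"
      using X q q0 ci(2) T by (intro mult_mono power_mono) (auto simp: X_def)
    also have "\<dots> = (c i * L powr a i) * T ^ (i - 1) * p ^ (i - 1) * p"
      by (subst i1) (simp add: field_simps)
    also have "\<dots> \<le> (C * s powr a i / (16 * real k ^ 2)) * T ^ (i - 1) * p ^ (i - 1) * p"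
      using cL T ppos by (intro mult_right_mono) auto
    also have "\<dots> = B i * p / (16 * real k ^ 2)"
      unfolding B_def C_def p_def by (simp add: field_simps power_divide)
    finally have "X * (real m / real N) ^ i \<le> B i * p / (16 * real k ^ 2)" .
    hence "X * (real m / real N) ^ i / B i \<le> (B i * p / (16 * real k ^ 2)) / B i"
      using Bpos[OF i] by (intro divide_right_mono) auto
    hence "X * (real m / real N) ^ i / B i \<le> p / (16 * real k ^ 2)"
      using Bpos[OF i] by simp
    hence "real N * (X * (real m / real N) ^ i / B i) \<le> real N * (p / (16 * real k ^ 2))"
      using Npos by (intro mult_left_mono) auto
    thus ?thesis unfolding X_def P_def p_def using Npos by (simp add: field_simps)
  qed
  have potV: "pot \<phi> E V \<le> P / 32"
  proof -
    have "{e\<in>E. e \<subseteq> V} = E" using Esub by auto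
    hence "pot \<phi> E V = (\<Sum>e\<in>E. \<phi> (card e) / real N ^ card e)" unfolding pot_def cV by simp
    also have "\<dots> = (\<Sum>i\<in>{2..k}. \<Sum>e\<in>{e\<in>E. card e = i}. \<phi> (card e) / real N ^ card e)"
      by (rule sum.group[symmetric]) (use finE Esub in auto)
    also have "\<dots> = (\<Sum>i\<in>{2..k}. real i * real (card (edges_of_size E i)) * (real m / real N) ^ i / B i)"
    proof (rule sum.cong[OF refl])
      fix i assume "i \<in> {2..k}"
      have "(\<Sum>e\<in>{e\<in>E. card e = i}. \<phi> (card e) / real N ^ card e)
          = (\<Sum>e\<in>{e\<in>E. card e = i}. \<phi> i / real N ^ i)" by simp
      also have "\<dots> = real (card (edges_of_size E i)) * (\<phi> i / real N ^ i)"
        unfolding edges_of_size_def by simp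
      also have "\<dots> = real i * real (card (edges_of_size E i)) * (real m / real N) ^ i / B i"
        unfolding \<phi>_def by (simp add: power_divide mult_ac)
      finally show "(\<Sum>e\<in>{e\<in>E. card e = i}. \<phi> (card e) / real N ^ card e) = \<dots>" .
    qed
    also have "\<dots> \<le> (\<Sum>i\<in>{2..k}. P / (16 * real k ^ 2))"
      by (rule sum_mono) (rule termb)
    also have "\<dots> = real (k - 1) * (P / (16 * real k ^ 2))" using assms(1) by simp
    also have "\<dots> \<le> P / 32"
    proof -
      have k2: "real k \<ge> 2" using assms(1) by simp
      have "real (k - 1) \<le> real k * real k / 2" 
      proof -
        have kk: "2 * real k \<le> real k * real k" using k2 by (intro mult_right_mono) auto
        thus ?thesis using k2 assms(1) of_nat_diff[of 1 k] by linarith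
      qed
      hence "real (k - 1) / (16 * real k ^ 2) \<le> 1 / 32" using k2 by (simp add: field_simps power2_eq_square)
      hence "real (k - 1) / (16 * real k ^ 2) * P \<le> 1 / 32 * P" using P5 by (intro mult_right_mono) auto
      thus ?thesis by simp
    qed
    finally show ?thesis .
  qed
  define F where "F = induced_edges E W"
  have finF: "finite F" unfolding F_def induced_edges_def using finE by simp
  have Fsub: "\<forall>e\<in>F. e \<subseteq> W \<and> 2 \<le> card e \<and> card e \<le> k" unfolding F_def induced_edges_def using Esub by auto
  define Bad where "Bad = {v\<in>W. \<exists>i\<in>{2..k}. real (degree_i F i v) > B i}"
  have potW: "pot \<phi> E W = (\<Sum>e\<in>F. real (card e) / B (card e))"
    unfolding pot_def W(2) F_def induced_edges_def
  proof (rule sum.cong[OF refl])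
    fix e assume "e \<in> {e \<in> E. e \<subseteq> W}"
    have "real m ^ card e > 0" using mge1 by simp
    thus "\<phi> (card e) / real m ^ card e = real (card e) / B (card e)" unfolding \<phi>_def by simp
  qed
  have badcard: "real (card Bad) \<le> pot \<phi> E W"
  proof -
    define g where "g = (\<lambda>v. \<Sum>e\<in>F. if v \<in> e then 1 / B (card e) else 0)"
    have gnn: "g v \<ge> 0" for v unfolding g_def using Bnn by (intro sum_nonneg) auto
    have "(\<Sum>e\<in>F. real (card e) / B (card e)) = (\<Sum>e\<in>F. \<Sum>v\<in>W. if v \<in> e then 1 / B (card e) else 0)"
    proof (rule sum.cong[OF refl])
      fix e assume e: "e \<in> F"
      have "(\<Sum>v\<in>W. if v \<in> e then 1 / B (card e) else 0) = (\<Sum>v\<in>{v\<in>W. v\<in>e}. 1 / B (card e))"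
        by (rule sum.inter_filter[OF finW, symmetric])
      also have "{v\<in>W. v\<in>e} = e" using Fsub e by auto
      finally show "real (card e) / B (card e) = (\<Sum>v\<in>W. if v \<in> e then 1 / B (card e) else 0)" by simp
    qed
    also have "\<dots> = (\<Sum>v\<in>W. g v)" unfolding g_def by (rule sum.swap)
    finally have A: "(\<Sum>e\<in>F. real (card e) / B (card e)) = (\<Sum>v\<in>W. g v)" .
    have Bs: "(\<Sum>v\<in>Bad. g v) \<le> (\<Sum>v\<in>W. g v)"
      by (rule sum_mono2[OF finW]) (auto simp: Bad_def gnn)
    have C: "(\<Sum>v\<in>Bad. g v) \<ge> (\<Sum>v\<in>Bad. 1)"
    proof (rule sum_mono)
      fix v assume "v \<in> Bad"
      then obtain i where i: "i \<in> {2..k}" "real (degree_i F i v) > B i" unfolding Bad_def by auto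
      have "g v \<ge> (\<Sum>e\<in>{e\<in>F. card e = i \<and> v \<in> e}. if v \<in> e then 1 / B (card e) else 0)"
        unfolding g_def using Bnn by (intro sum_mono2[OF finF]) auto
      also have "(\<Sum>e\<in>{e\<in>F. card e = i \<and> v \<in> e}. if v \<in> e then 1 / B (card e) else 0)
          = (\<Sum>e\<in>{e\<in>F. card e = i \<and> v \<in> e}. 1 / B i)" by (rule sum.cong) auto
      also have "\<dots> = real (degree_i F i v) / B i"
      proof -
        have "{e\<in>F. card e = i \<and> v \<in> e} = {e \<in> edges_of_size F i. v \<in> e}" unfolding edges_of_size_def by auto
        thus ?thesis unfolding degree_i_def by simp
      qed
      finally have gd: "real (degree_i F i v) / B i \<le> g v" .
      have "1 < real (degree_i F i v) / B i" using i Bpos[OF i(1)] by (simp add: less_divide_eq)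
      thus "1 \<le> g v" using gd by linarith
    qed
    show ?thesis using potW A Bs C by simp
  qed
  define Vs where "Vs = W - Bad"
  show "\<exists>Vs \<subseteq> V.
         3 / 4 * (real N / exp s) \<le> real (card Vs) \<and> real (card Vs) \<le> real N / exp s \<and>
         (\<forall>v\<in>Vs. \<forall>i\<in>{2..k}.
            real (degree_i (induced_edges E Vs) i v)
              \<le> real ((k - 1) choose (i - 1)) * s powr (real (k - i) / real (k - 1))
                 * (T / exp s) ^ (i - 1))"
  proof (intro exI[of _ Vs] conjI ballI)
    show "Vs \<subseteq> V" unfolding Vs_def using W by auto
    have BadW: "Bad \<subseteq> W" unfolding Bad_def by auto
    have cVs: "card Vs = m - card Bad" unfolding Vs_def using BadW finW W(2) by (simp add: card_Diff_subset finite_subset)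
    have cB: "real (card Bad) \<le> P / 32" using badcard W(3) potV by linarith
    have "card Bad \<le> m" using BadW finW W(2) card_mono by blast
    hence rc: "real (card Vs) = real m - real (card Bad)" using cVs by (simp add: of_nat_diff)
    have h1: "real (card Vs) \<ge> P - 1 - P / 32" using rc cB m1 by linarith
    have h2: "P - 1 - P / 32 \<ge> 3 / 4 * P" using P5 by simp
    show "3 / 4 * (real N / exp s) \<le> real (card Vs)" using h1 h2 unfolding P_def by linarith
    show "real (card Vs) \<le> real N / exp s" using rc m1 of_nat_0_le_iff[of "card Bad"] unfolding P_def[symmetric] by linarith
  next
    fix v i assume v: "v \<in> Vs" and i: "i \<in> {2..k}"
    have "degree_i (induced_edges E Vs) i v \<le> degree_i F i v"
      unfolding degree_i_def F_def edges_of_size_def induced_edges_def Vs_def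
      by (rule card_mono) (use finE in auto)
    moreover have "\<not> real (degree_i F i v) > B i" using v i unfolding Vs_def Bad_def by auto
    ultimately show "real (degree_i (induced_edges E Vs) i v)
              \<le> real ((k - 1) choose (i - 1)) * s powr (real (k - i) / real (k - 1))
                 * (T / exp s) ^ (i - 1)" unfolding B_def a_def by linarith
  qed
qed

end
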